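(* Let $\alpha \ge 1$, $\gamma \ge 1$, $A>0$ be constants. Let $n,\rho:[0,T]\times\mathbb{R}^3\to\mathbb{R}$, $u,H:[0,T]\times\mathbb{R}^3\to\mathbb{R}^3$ be $C^1$ functions with $n>0$, $\rho\ge 0$ and $\operatorname{div} H = 0$. Set $R=\rho+n$, $S=\rho/n$, $P=\rho^\alpha + A n^\gamma$, $q = P+\tfrac12|H|^2$, and $\frac{d}{dt}=\partial_t + (u\cdot\nabla)$. Regard $P$ as the function $$P(R,S)=\Big(\frac{RS}{S+1}\Big)^\alpha + A\Big(\frac{R}{S+1}\Big)^\gamma,$$ and let $$P_R=\frac{\partial P(R,S)}{\partial R}=\frac{\alpha}{R}\Big(\frac{RS}{S+1}\Big)^\alpha+\frac{\gamma A}{R}\Big(\frac{R}{S+1}\Big)^\gamma>0.$$ Then $(n,\rho,u,H)$ satisfies the two-fluid MHD system $$\partial_t n+\operatorname{div}(nu)=0,\quad \partial_t\rho+\operatorname{div}(\rho u)=0,\quad \partial_t((\rho+n)u)+\operatorname{div}((\rho+n)u\otimes u-H\otimes H)+\nabla q=0,\quad \partial_t H-\nabla\times(u\times H)=0$$ if and only if $U=(P,u,H,S)$ satisfies $$\frac{1}{RP_R}\frac{dP}{dt}+\operatorname{div}u=0,\quad R\frac{du}{dt}-(H\cdot\nabla)H+\nabla q=0,\quad \frac{dH}{dt}-(H\cdot\nabla)u+H\operatorname{div}u=0,\quad \frac{dS}{dt}=0 .$$ Moreover, the latter system can be written as $A_0(U)\partial_t U+\sum_{j=1}^3 A_j(U)\partial_j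 U=0$ with $A_0=\operatorname{diag}(1/(RP_R),R,R,R,1,1,1,1)$ and symmetric $8\times 8$ matrices $A_j(U)$, $j=1,2,3$; in particular it is a symmetric hyperbolic system ($A_0>0$) whenever $n>0$ and $\rho\ge0$.
   Context: This concerns a model of ideal compressible isentropic two-fluid magnetohydrodynamics: $n$ and $\rho$ are the densities of the two fluids, $u$ the common velocity, $H$ the magnetic field, $P$ the pressure, $q$ the total pressure. The quantity $S=\rho/n$ is an "entropy-like" function and $R=\rho+n$ the total density; note $n=R/(S+1)$, $\rho=RS/(S+1)$. *)

theory Defs
  imports "HOL-Analysis.Analysis"
begin

definition C1_slab :: "real \<Rightarrow> (real \<Rightarrow> real^3 \<Rightarrow> 'b::real_normed_vector) \<Rightarrow> bool" where
  "C1_slab T f \<longleftrightarrow> (\<exists>D. (\<forall>p \<in> {0..T} \<times> UNIV.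
        ((\<lambda>q. f (fst q) (snd q)) has_derivative D p) (at p within {0..T} \<times> UNIV))
     \<and> (\<forall>v. continuous_on ({0..T} \<times> UNIV) (\<lambda>p. D p v)))"

definition pt :: "real \<Rightarrow> (real \<Rightarrow> real^3 \<Rightarrow> 'b::real_normed_vector) \<Rightarrow> real \<Rightarrow> real^3 \<Rightarrow> 'b" where
  "pt T f t x = vector_derivative (\<lambda>s. f s x) (at t within {0..T})"

definition px :: "3 \<Rightarrow> (real \<Rightarrow> real^3 \<Rightarrow> 'b::real_normed_vector) \<Rightarrow> real \<Rightarrow> real^3 \<Rightarrow> 'b" where
  "px j f t x = vector_derivative (\<lambda>s. f t (x + s *\<^sub>R axis j 1)) (at 0)"

definition dvg :: "(real \<Rightarrow> real^3 \<Rightarrow> real^3) \<Rightarrow> real \<Rightarrow> real^3 \<Rightarrow> real" where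
  "dvg F t x = (\<Sum>j\<in>UNIV. px j F t x $ j)"

definition grad :: "(real \<Rightarrow> real^3 \<Rightarrow> real) \<Rightarrow> real \<Rightarrow> real^3 \<Rightarrow> real^3" where
  "grad f t x = (\<chi> j. px j f t x)"

definition curl :: "(real \<Rightarrow> real^3 \<Rightarrow> real^3) \<Rightarrow> real \<Rightarrow> real^3 \<Rightarrow> real^3" where
  "curl F t x = vector [px 2 F t x $ 3 - px 3 F t x $ 2,
                        px 3 F t x $ 1 - px 1 F t x $ 3,
                        px 1 F t x $ 2 - px 2 F t x $ 1]"

definition outer :: "real^3 \<Rightarrow> real^3 \<Rightarrow> real^3^3" where
  "outer a b = (\<chi> i j. a $ i * b $ j)"

definition dvgT :: "(real \<Rightarrow> real^3 \<Rightarrow> real^3^3) \<Rightarrow> real \<Rightarrow> real^3 \<Rightarrow> real^3" where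
  "dvgT M t x = (\<chi> i. \<Sum>j\<in>UNIV. px j M t x $ i $ j)"

definition adv :: "(real \<Rightarrow> real^3 \<Rightarrow> real^3) \<Rightarrow> (real \<Rightarrow> real^3 \<Rightarrow> 'b::real_normed_vector) \<Rightarrow> real \<Rightarrow> real^3 \<Rightarrow> 'b" where
  "adv w f t x = (\<Sum>j\<in>UNIV. w t x $ j *\<^sub>R px j f t x)"

definition matd :: "real \<Rightarrow> (real \<Rightarrow> real^3 \<Rightarrow> real^3) \<Rightarrow> (real \<Rightarrow> real^3 \<Rightarrow> 'b::real_normed_vector) \<Rightarrow> real \<Rightarrow> real^3 \<Rightarrow> 'b" where
  "matd T u f t x = pt T f t x + adv u f t x"

definition Pfun :: "real \<Rightarrow> real \<Rightarrow> real \<Rightarrow> real \<Rightarrow> real \<Rightarrow> real" where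
  "Pfun \<alpha> \<gamma> A R S = (R * S / (S + 1)) powr \<alpha> + A * (R / (S + 1)) powr \<gamma>"

definition PR :: "real \<Rightarrow> real \<Rightarrow> real \<Rightarrow> real \<Rightarrow> real \<Rightarrow> real" where
  "PR \<alpha> \<gamma> A R S = \<alpha> / R * (R * S / (S + 1)) powr \<alpha> + \<gamma> * A / R * (R / (S + 1)) powr \<gamma>"

definition diag8 :: "real^8 \<Rightarrow> real^8^8" where
  "diag8 d = (\<chi> i j. if i = j then d $ i else 0)"

definition pos_def8 :: "real^8^8 \<Rightarrow> bool" where
  "pos_def8 M \<longleftrightarrow> (\<forall>v. v \<noteq> 0 \<longrightarrow> 0 < v \<bullet> (M *v v))"

end

theory Submission
  imports Defs
begin

lemma powr_deriv:
  fixes g :: "real \<Rightarrow> real"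
  assumes g: "(g has_real_derivative g') (at \<tau> within S)" and "\<tau> \<in> S"
    and nn: "\<forall>s\<in>S. g s \<ge> 0" and a: "\<alpha> \<ge> 1"
  shows "((\<lambda>s. g s powr \<alpha>) has_real_derivative
           (if \<alpha> = 1 then 1 else \<alpha> * g \<tau> powr (\<alpha> - 1)) * g') (at \<tau> within S)"
proof (cases "\<alpha> = 1")
  case True
  have "((\<lambda>s. g s powr \<alpha>) has_vector_derivative g') (at \<tau> within S)"
    using has_vector_derivative_transform[of \<tau> S "\<lambda>s. g s powr \<alpha>" g g'] g nn \<open>\<tau> \<in> S\<close> True
    by (simp add: has_real_derivative_iff_has_vector_derivative)
  then show ?thesis using True by (simp add: has_real_derivative_iff_has_vector_derivative)
next
  case False
  then have a1: "\<alpha> > 1" using a by simp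
  show ?thesis
  proof (cases "g \<tau> > 0")
    case True
    have "((\<lambda>s. g s powr \<alpha>) has_real_derivative (\<alpha> * g \<tau> powr (\<alpha> - 1)) * g') (at \<tau> within S)"
      by (rule DERIV_chain2[OF has_real_derivative_powr[OF True] g])
    then show ?thesis using False by simp
  next
    case False
    then have g0: "g \<tau> = 0" using nn \<open>\<tau> \<in> S\<close> by force
    have l1: "((\<lambda>y. (g y - g \<tau>) / (y - \<tau>)) \<longlongrightarrow> g') (at \<tau> within S)"
      using g by (simp add: has_field_derivative_iff)
    have cg: "(g \<longlongrightarrow> 0) (at \<tau> within S)"
      using DERIV_continuous[OF g] g0 by (simp add: continuous_within)
    have ev: "\<forall>\<^sub>F y in at \<tau> within S. 0 \<le> g y"
      using nn by (auto simp: eventually_at_filter)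
    have l2: "((\<lambda>y. g y powr (\<alpha> - 1)) \<longlongrightarrow> 0) (at \<tau> within S)"
      by (rule tendsto_zero_powrI[OF cg tendsto_const ev]) (use a1 in simp)
    have l3: "((\<lambda>y. (g y - g \<tau>) / (y - \<tau>) * g y powr (\<alpha> - 1)) \<longlongrightarrow> g' * 0) (at \<tau> within S)"
      by (rule tendsto_mult[OF l1 l2])
    have ev2: "\<forall>\<^sub>F y in at \<tau> within S. (g y - g \<tau>) / (y - \<tau>) * g y powr (\<alpha> - 1)
               = (g y powr \<alpha> - g \<tau> powr \<alpha>) / (y - \<tau>)"
    proof -
      have "g y * g y powr (\<alpha> - 1) = g y powr \<alpha>" if "y \<in> S" for y
      proof (cases "g y = 0")
        case False
        then have "g y > 0" using nn that by force
        then show ?thesis by (simp add: powr_diff)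
      qed simp
      then show ?thesis using g0 by (auto simp: eventually_at_filter)
    qed
    have "((\<lambda>y. (g y powr \<alpha> - g \<tau> powr \<alpha>) / (y - \<tau>)) \<longlongrightarrow> 0) (at \<tau> within S)"
      using Lim_transform_eventually[OF l3 ev2] by simp
    then show ?thesis using g0 a1 by (simp add: has_field_derivative_iff)
  qed
qed

lemma hvd_vec:
  fixes f :: "real \<Rightarrow> 'a::euclidean_space ^ 'n"
  assumes d: "\<And>i. ((\<lambda>s. f s $ i) has_vector_derivative d $ i) F"
  shows "(f has_vector_derivative d) F"
proof -
  have e: "\<And>v::'a^'n. v = (\<Sum>i\<in>UNIV. axis i (v $ i))"
    by (simp add: vec_eq_iff axis_def if_distrib cong: if_cong)
  have bl: "bounded_linear (axis i :: 'a \<Rightarrow> 'a^'n)" for i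
    unfolding linear_conv_bounded_linear[symmetric]
    by (rule linearI) (auto simp: vec_eq_iff axis_def)
  have "((\<lambda>s. \<Sum>i\<in>UNIV. axis i (f s $ i)) has_vector_derivative (\<Sum>i\<in>UNIV. axis i (d $ i))) F"
    by (intro has_vector_derivative_sum bounded_linear.has_vector_derivative[OF bl d])
  moreover have "(\<lambda>s. \<Sum>i\<in>UNIV. axis i (f s $ i)) = f" by (rule ext) (rule e[symmetric])
  moreover have "(\<Sum>i\<in>UNIV. axis i (d $ i)) = d" by (rule e[symmetric])
  ultimately show ?thesis by simp
qed

lemma hvd_nth:
  "(f has_vector_derivative d) F \<Longrightarrow> ((\<lambda>s. f s $ i) has_vector_derivative d $ i) F"
  by (rule bounded_linear.has_vector_derivative[OF bounded_linear_vec_nth])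

lemma C1_pt:
  assumes "C1_slab T f" "t \<in> {0..T}"
  shows "((\<lambda>s. f s x) has_vector_derivative pt T f t x) (at t within {0..T})"
proof -
  obtain D where D: "\<forall>p \<in> {0..T} \<times> UNIV.
        ((\<lambda>q. f (fst q) (snd q)) has_derivative D p) (at p within {0..T} \<times> UNIV)"
    using assms(1) unfolding C1_slab_def by blast
  have c: "((\<lambda>s. (s, x)) has_derivative (\<lambda>h. (h, 0))) (at t within {0..T})"
    by (auto intro!: derivative_eq_intros)
  have "((\<lambda>s. (\<lambda>q. f (fst q) (snd q)) ((\<lambda>s. (s, x)) s)) has_derivative (\<lambda>h. D (t,x) (h, 0))) (at t within {0..T})"
    by (rule has_derivative_in_compose2[of "{0..T} \<times> UNIV" "\<lambda>q. f (fst q) (snd q)" D, OF _ _ _ c])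
       (use D assms(2) in auto)
  then have "(\<lambda>s. f s x) differentiable (at t within {0..T})"
    unfolding differentiable_def by auto
  then show ?thesis unfolding pt_def by (simp add: vector_derivative_works)
qed

lemma C1_px:
  assumes "C1_slab T f" "t \<in> {0..T}"
  shows "((\<lambda>s. f t (x + s *\<^sub>R axis j 1)) has_vector_derivative px j f t x) (at 0)"
proof -
  obtain D where D: "\<forall>p \<in> {0..T} \<times> UNIV.
        ((\<lambda>q. f (fst q) (snd q)) has_derivative D p) (at p within {0..T} \<times> UNIV)"
    using assms(1) unfolding C1_slab_def by blast
  have c: "((\<lambda>s. (t, x + s *\<^sub>R axis j 1)) has_derivative (\<lambda>h. (0, h *\<^sub>R axis j 1))) (at 0)"
    by (auto intro!: derivative_eq_intros)
  have "((\<lambda>s. (\<lambda>q. f (fst q) (snd q)) ((\<lambda>s. (t, x + s *\<^sub>R axis j 1)) s)) has_derivative (\<lambda>h. D (t,x + 0 *\<^sub>R axis j 1) (0, h *\<^sub>R axis j 1))) (at 0)"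
    by (rule has_derivative_in_compose2[of "{0..T} \<times> UNIV" "\<lambda>q. f (fst q) (snd q)" D, OF _ _ _ c])
       (use D assms(2) in auto)
  then have "(\<lambda>s. f t (x + s *\<^sub>R axis j 1)) differentiable (at 0)"
    unfolding differentiable_def by auto
  then show ?thesis unfolding px_def by (simp add: vector_derivative_works)
qed

lemma d_outer:
  assumes a: "(a has_vector_derivative a') (at \<tau> within S)"
      and b: "(b has_vector_derivative b') (at \<tau> within S)"
  shows "((\<lambda>s. outer (a s) (b s)) has_vector_derivative (outer a' (b \<tau>) + outer (a \<tau>) b')) (at \<tau> within S)"
proof (rule hvd_vec, rule hvd_vec)
  fix i j
  have "((\<lambda>s. a s $ i * b s $ j) has_vector_derivative (a \<tau> $ i * b' $ j + a' $ i * b \<tau> $ j)) (at \<tau> within S)"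
    by (rule has_vector_derivative_mult[OF hvd_nth[OF a] hvd_nth[OF b]])
  then show "((\<lambda>s. outer (a s) (b s) $ i $ j) has_vector_derivative (outer a' (b \<tau>) + outer (a \<tau>) b') $ i $ j) (at \<tau> within S)"
    by (simp add: outer_def algebra_simps)
qed

lemma d_cross:
  assumes a: "(a has_vector_derivative a') (at \<tau> within S)"
      and b: "(b has_vector_derivative b') (at \<tau> within S)"
  shows "((\<lambda>s. cross3 (a s) (b s)) has_vector_derivative (cross3 a' (b \<tau>) + cross3 (a \<tau>) b')) (at \<tau> within S)"
proof (rule hvd_vec)
  fix i :: 3
  have m: "\<And>k l. ((\<lambda>s. a s $ k * b s $ l) has_vector_derivative (a \<tau> $ k * b' $ l + a' $ k * b \<tau> $ l)) (at \<tau> within S)"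
    by (rule has_vector_derivative_mult[OF hvd_nth[OF a] hvd_nth[OF b]])
  have "((\<lambda>s. a s $ k * b s $ l - a s $ l * b s $ k) has_vector_derivative
     (a' $ k * b \<tau> $ l - a' $ l * b \<tau> $ k + (a \<tau> $ k * b' $ l - a \<tau> $ l * b' $ k))) (at \<tau> within S)" for k l
    by (rule has_vector_derivative_eq_rhs[OF has_vector_derivative_diff[OF m m]]) (simp add: algebra_simps)
  from this[of 2 3] this[of 3 1] this[of 1 2]
  show "((\<lambda>s. cross3 (a s) (b s) $ i) has_vector_derivative (cross3 a' (b \<tau>) + cross3 (a \<tau>) b') $ i) (at \<tau> within S)"
    using exhaust_3[of i] by (auto simp: cross3_def)
qed

lemma d_norm2:
  assumes a: "(a has_vector_derivative a') (at \<tau> within S)"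
  shows "((\<lambda>s. (norm (a s))\<^sup>2) has_vector_derivative (2 * (a \<tau> \<bullet> a'))) (at \<tau> within S)"
proof -
  have "((\<lambda>s. a s \<bullet> a s) has_vector_derivative (a \<tau> \<bullet> a' + a' \<bullet> a \<tau>)) (at \<tau> within S)"
    by (rule bounded_bilinear.has_vector_derivative[OF bounded_bilinear_inner a a])
  then show ?thesis by (simp add: power2_norm_eq_inner inner_commute)
qed

lemma exhaust_8:
  fixes x :: 8
  shows "x = 1 \<or> x = 2 \<or> x = 3 \<or> x = 4 \<or> x = 5 \<or> x = 6 \<or> x = 7 \<or> x = 8"
proof (induct x)
  case (of_int z)
  then have "z = 0 \<or> z = 1 \<or> z = 2 \<or> z = 3 \<or> z = 4 \<or> z = 5 \<or> z = 6 \<or> z = 7" by fastforce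
  then show ?case by auto
qed

lemma vector_8 [simp]:
 "(vector [x1,x2,x3,x4,x5,x6,x7,x8] ::('a::zero)^8)$1 = x1"
 "(vector [x1,x2,x3,x4,x5,x6,x7,x8] ::('a::zero)^8)$2 = x2"
 "(vector [x1,x2,x3,x4,x5,x6,x7,x8] ::('a::zero)^8)$3 = x3"
 "(vector [x1,x2,x3,x4,x5,x6,x7,x8] ::('a::zero)^8)$4 = x4"
 "(vector [x1,x2,x3,x4,x5,x6,x7,x8] ::('a::zero)^8)$5 = x5"
 "(vector [x1,x2,x3,x4,x5,x6,x7,x8] ::('a::zero)^8)$6 = x6"
 "(vector [x1,x2,x3,x4,x5,x6,x7,x8] ::('a::zero)^8)$7 = x7"
 "(vector [x1,x2,x3,x4,x5,x6,x7,x8] ::('a::zero)^8)$8 = x8"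
  unfolding vector_def by simp_all

lemma d_vec8:
  assumes "(f1 has_vector_derivative d1) F" "(f2 has_vector_derivative d2) F"
    "(f3 has_vector_derivative d3) F" "(f4 has_vector_derivative d4) F"
    "(f5 has_vector_derivative d5) F" "(f6 has_vector_derivative d6) F"
    "(f7 has_vector_derivative d7) F" "(f8 has_vector_derivative d8) F"
  shows "((\<lambda>s. vector [f1 s, f2 s, f3 s, f4 s, f5 s, f6 s, f7 s, f8 s] :: real^8)
          has_vector_derivative vector [d1, d2, d3, d4, d5, d6, d7, d8]) F"
proof (rule hvd_vec)
  fix i :: 8
  show "((\<lambda>s. (vector [f1 s, f2 s, f3 s, f4 s, f5 s, f6 s, f7 s, f8 s] :: real^8) $ i)
          has_vector_derivative (vector [d1, d2, d3, d4, d5, d6, d7, d8] :: real^8) $ i) F"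
    using exhaust_8[of i] assms by (elim disjE) (simp_all del: One_nat_def)
qed

lemma comp_derivs:
  fixes N Rh :: "real \<Rightarrow> real" and Uu Hh :: "real \<Rightarrow> real^3" and A \<gamma> :: real
  assumes dn: "(N has_vector_derivative n') (at \<tau> within S)"
      and dr: "(Rh has_vector_derivative r') (at \<tau> within S)"
      and du: "(Uu has_vector_derivative u') (at \<tau> within S)"
      and dh: "(Hh has_vector_derivative h') (at \<tau> within S)"
      and tS: "\<tau> \<in> S" and pos: "\<forall>s\<in>S. N s > 0 \<and> Rh s \<ge> 0" and a: "\<alpha> \<ge> 1"
  defines "Pd \<equiv> (if \<alpha> = 1 then 1 else \<alpha> * Rh \<tau> powr (\<alpha> - 1)) * r' + A * (\<gamma> * N \<tau> powr (\<gamma> - 1) * n')"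
  shows "((\<lambda>s. N s *\<^sub>R Uu s) has_vector_derivative (N \<tau> *\<^sub>R u' + n' *\<^sub>R Uu \<tau>)) (at \<tau> within S)"
    and "((\<lambda>s. Rh s *\<^sub>R Uu s) has_vector_derivative (Rh \<tau> *\<^sub>R u' + r' *\<^sub>R Uu \<tau>)) (at \<tau> within S)"
    and "((\<lambda>s. (Rh s + N s) *\<^sub>R Uu s) has_vector_derivative ((Rh \<tau> + N \<tau>) *\<^sub>R u' + (r' + n') *\<^sub>R Uu \<tau>)) (at \<tau> within S)"
    and "((\<lambda>s. (Rh s + N s) *\<^sub>R outer (Uu s) (Uu s) - outer (Hh s) (Hh s)) has_vector_derivative
          ((Rh \<tau> + N \<tau>) *\<^sub>R (outer u' (Uu \<tau>) + outer (Uu \<tau>) u') + (r' + n') *\<^sub>R outer (Uu \<tau>) (Uu \<tau>)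
            - (outer h' (Hh \<tau>) + outer (Hh \<tau>) h'))) (at \<tau> within S)"
    and "((\<lambda>s. Rh s powr \<alpha> + A * N s powr \<gamma>) has_vector_derivative Pd) (at \<tau> within S)"
    and "((\<lambda>s. Rh s powr \<alpha> + A * N s powr \<gamma> + 1/2 * (norm (Hh s))\<^sup>2) has_vector_derivative (Pd + Hh \<tau> \<bullet> h')) (at \<tau> within S)"
    and "((\<lambda>s. cross3 (Uu s) (Hh s)) has_vector_derivative (cross3 u' (Hh \<tau>) + cross3 (Uu \<tau>) h')) (at \<tau> within S)"
    and "((\<lambda>s. Rh s / N s) has_vector_derivative ((r' * N \<tau> - Rh \<tau> * n') / (N \<tau> * N \<tau>))) (at \<tau> within S)"
    and "((\<lambda>s. vector [Rh s powr \<alpha> + A * N s powr \<gamma>, Uu s $ 1, Uu s $ 2, Uu s $ 3, Hh s $ 1, Hh s $ 2, Hh s $ 3, Rh s / N s] :: real^8)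
          has_vector_derivative vector [Pd, u' $ 1, u' $ 2, u' $ 3, h' $ 1, h' $ 2, h' $ 3, (r' * N \<tau> - Rh \<tau> * n') / (N \<tau> * N \<tau>)]) (at \<tau> within S)"
proof -
  have dn': "(N has_real_derivative n') (at \<tau> within S)" and dr': "(Rh has_real_derivative r') (at \<tau> within S)"
    using dn dr by (simp_all add: has_real_derivative_iff_has_vector_derivative)
  show 1: "((\<lambda>s. N s *\<^sub>R Uu s) has_vector_derivative (N \<tau> *\<^sub>R u' + n' *\<^sub>R Uu \<tau>)) (at \<tau> within S)"
    by (rule has_vector_derivative_scaleR[OF dn' du])
  show "((\<lambda>s. Rh s *\<^sub>R Uu s) has_vector_derivative (Rh \<tau> *\<^sub>R u' + r' *\<^sub>R Uu \<tau>)) (at \<tau> within S)"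
    by (rule has_vector_derivative_scaleR[OF dr' du])
  have dR: "((\<lambda>s. Rh s + N s) has_real_derivative (r' + n')) (at \<tau> within S)"
    by (rule DERIV_add[OF dr' dn'])
  show "((\<lambda>s. (Rh s + N s) *\<^sub>R Uu s) has_vector_derivative ((Rh \<tau> + N \<tau>) *\<^sub>R u' + (r' + n') *\<^sub>R Uu \<tau>)) (at \<tau> within S)"
    by (rule has_vector_derivative_scaleR[OF dR du])
  show "((\<lambda>s. (Rh s + N s) *\<^sub>R outer (Uu s) (Uu s) - outer (Hh s) (Hh s)) has_vector_derivative
          ((Rh \<tau> + N \<tau>) *\<^sub>R (outer u' (Uu \<tau>) + outer (Uu \<tau>) u') + (r' + n') *\<^sub>R outer (Uu \<tau>) (Uu \<tau>)
            - (outer h' (Hh \<tau>) + outer (Hh \<tau>) h'))) (at \<tau> within S)"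
    by (rule has_vector_derivative_diff[OF has_vector_derivative_scaleR[OF dR d_outer[OF du du]] d_outer[OF dh dh]])
  have dP1: "((\<lambda>s. Rh s powr \<alpha>) has_real_derivative (if \<alpha> = 1 then 1 else \<alpha> * Rh \<tau> powr (\<alpha> - 1)) * r') (at \<tau> within S)"
    by (rule powr_deriv[OF dr' tS _ a]) (use pos in auto)
  have Np: "N \<tau> > 0" using pos tS by auto
  have dP2: "((\<lambda>s. N s powr \<gamma>) has_real_derivative (\<gamma> * N \<tau> powr (\<gamma> - 1)) * n') (at \<tau> within S)"
    by (rule DERIV_chain2[OF has_real_derivative_powr[OF Np] dn'])
  have dP: "((\<lambda>s. Rh s powr \<alpha> + A * N s powr \<gamma>) has_real_derivative Pd) (at \<tau> within S)"
    unfolding Pd_def by (intro DERIV_add dP1 DERIV_cmult dP2)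
  then show "((\<lambda>s. Rh s powr \<alpha> + A * N s powr \<gamma>) has_vector_derivative Pd) (at \<tau> within S)"
    by (simp add: has_real_derivative_iff_has_vector_derivative)
  have "((\<lambda>s. Rh s powr \<alpha> + A * N s powr \<gamma> + 1/2 * (norm (Hh s))\<^sup>2) has_vector_derivative (Pd + 1/2 * (2 * (Hh \<tau> \<bullet> h')))) (at \<tau> within S)"
    using dP d_norm2[OF dh]
    by (intro has_vector_derivative_add has_vector_derivative_mult_right)
       (simp_all add: has_real_derivative_iff_has_vector_derivative)
  then show "((\<lambda>s. Rh s powr \<alpha> + A * N s powr \<gamma> + 1/2 * (norm (Hh s))\<^sup>2) has_vector_derivative (Pd + Hh \<tau> \<bullet> h')) (at \<tau> within S)"
    by simp
  show "((\<lambda>s. cross3 (Uu s) (Hh s)) has_vector_derivative (cross3 u' (Hh \<tau>) + cross3 (Uu \<tau>) h')) (at \<tau> within S)"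
    by (rule d_cross[OF du dh])
  have dS: "((\<lambda>s. Rh s / N s) has_real_derivative ((r' * N \<tau> - Rh \<tau> * n') / (N \<tau> * N \<tau>))) (at \<tau> within S)"
    by (rule DERIV_divide[OF dr' dn']) (use Np in simp)
  then show "((\<lambda>s. Rh s / N s) has_vector_derivative ((r' * N \<tau> - Rh \<tau> * n') / (N \<tau> * N \<tau>))) (at \<tau> within S)"
    by (simp add: has_real_derivative_iff_has_vector_derivative)
  show "((\<lambda>s. vector [Rh s powr \<alpha> + A * N s powr \<gamma>, Uu s $ 1, Uu s $ 2, Uu s $ 3, Hh s $ 1, Hh s $ 2, Hh s $ 3, Rh s / N s] :: real^8)
          has_vector_derivative vector [Pd, u' $ 1, u' $ 2, u' $ 3, h' $ 1, h' $ 2, h' $ 3, (r' * N \<tau> - Rh \<tau> * n') / (N \<tau> * N \<tau>)]) (at \<tau> within S)"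
    by (rule d_vec8) (use dP dS hvd_nth[OF du] hvd_nth[OF dh] in \<open>simp_all add: has_real_derivative_iff_has_vector_derivative\<close>)
qed

lemma key_logic:
  fixes E1 E2 mn mr divu n0 r0 pr Pn K F1 F4 :: real and E3 Mom E4 Ind u0 :: "real^3"
  assumes n0: "n0 > 0" and K: "K = r0 * pr + n0 * Pn" "K > 0"
    and e1: "E1 = mn + n0 * divu" and e2: "E2 = mr + r0 * divu"
    and e3: "E3 = (E1 + E2) *\<^sub>R u0 + Mom" and e4: "E4 = Ind"
    and f1: "F1 = 1 / K * (pr * mr + Pn * mn) + divu" and f4: "F4 = (mr * n0 - r0 * mn) / (n0 * n0)"
  shows "(E1 = 0 \<and> E2 = 0 \<and> E3 = 0 \<and> E4 = 0) \<longleftrightarrow> (F1 = 0 \<and> Mom = 0 \<and> Ind = 0 \<and> F4 = 0)"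
proof
  assume h: "E1 = 0 \<and> E2 = 0 \<and> E3 = 0 \<and> E4 = 0"
  then have mn: "mn = - n0 * divu" and mr: "mr = - r0 * divu" using e1 e2 by auto
  have "pr * mr + Pn * mn = - K * divu" using mn mr K(1) by (simp add: algebra_simps)
  then have "F1 = 0" using f1 K(2) by simp
  moreover have "F4 = 0" using f4 mn mr by (simp add: algebra_simps)
  moreover have "Mom = 0"
  proof -
    have "E3 = Mom" using e3 h by simp
    then show ?thesis using h by simp
  qed
  ultimately show "F1 = 0 \<and> Mom = 0 \<and> Ind = 0 \<and> F4 = 0" using h e4 by simp
next
  assume h: "F1 = 0 \<and> Mom = 0 \<and> Ind = 0 \<and> F4 = 0"
  then have c: "mr * n0 = r0 * mn" using f4 n0 by (simp add: field_simps)
  have "pr * mr + Pn * mn = - K * divu" using h f1 K(2) by (simp add: field_simps)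
  then have "n0 * (pr * mr + Pn * mn) = - n0 * K * divu" by simp
  also have "n0 * (pr * mr + Pn * mn) = K * mn" using c K(1) by (simp add: algebra_simps)
  finally have "K * mn = K * (- n0 * divu)" by simp
  then have mn: "mn = - n0 * divu" using K(2) mult_left_cancel[of K mn "- n0 * divu"] by simp
  then have "mr * n0 = (- r0 * divu) * n0" using c by simp
  then have mr: "mr = - r0 * divu" using n0 mult_right_cancel[of n0 mr "- r0 * divu"] by simp
  show "E1 = 0 \<and> E2 = 0 \<and> E3 = 0 \<and> E4 = 0" using mn mr e1 e2 e3 e4 h by simp
qed

lemma pt_eq:
  assumes "((\<lambda>s. f s x) has_vector_derivative d) (at t within {0..T})" "t \<in> {0..T}" "0 < T"
  shows "pt T f t x = d"
proof -
  have "at t within {0..T} \<noteq> bot"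
    using assms(2,3) by (auto simp: trivial_limit_within islimpt_Icc)
  then show ?thesis unfolding pt_def by (rule vector_derivative_within[OF _ assms(1)])
qed

lemma px_eq:
  assumes "((\<lambda>s. f t (x + s *\<^sub>R axis j 1)) has_vector_derivative d) (at 0)"
  shows "px j f t x = d"
  unfolding px_def by (rule vector_derivative_at[OF assms])

definition Em :: "8 \<Rightarrow> 8 \<Rightarrow> real \<Rightarrow> real^8^8" where
  "Em p q c = (\<chi> a b. if a = p \<and> b = q then c else 0)"
definition uix :: "3 \<Rightarrow> 8" where "uix k = (if k = 1 then 2 else if k = 2 then 3 else 4)"
definition hix :: "3 \<Rightarrow> 8" where "hix k = (if k = 1 then 5 else if k = 2 then 6 else 7)"

definition Rof :: "real \<Rightarrow> real \<Rightarrow> real \<Rightarrow> real^8 \<Rightarrow> real" where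
  "Rof \<alpha> \<gamma> A V = (THE r. 0 < r \<and> Pfun \<alpha> \<gamma> A r (V $ 8) = V $ 1)"

definition cc :: "3 \<Rightarrow> real^8 \<Rightarrow> 3 \<Rightarrow> 3 \<Rightarrow> real" where
  "cc j V i k = (if i = j then V $ hix k else 0) - (if i = k then V $ hix j else 0)"

definition AjM :: "real \<Rightarrow> real \<Rightarrow> real \<Rightarrow> 3 \<Rightarrow> real^8 \<Rightarrow> real^8^8" where
  "AjM \<alpha> \<gamma> A j V =
     Em 1 1 (V $ uix j / (Rof \<alpha> \<gamma> A V * PR \<alpha> \<gamma> A (Rof \<alpha> \<gamma> A V) (V $ 8)))
     + (Em 1 (uix j) 1 + Em (uix j) 1 1)
     + (\<Sum>i\<in>UNIV. Em (uix i) (uix i) (Rof \<alpha> \<gamma> A V * V $ uix j))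
     + (\<Sum>i\<in>UNIV. \<Sum>k\<in>UNIV. Em (uix i) (hix k) (cc j V i k) + Em (hix k) (uix i) (cc j V i k))
     + (\<Sum>i\<in>UNIV. Em (hix i) (hix i) (V $ uix j))
     + Em 8 8 (V $ uix j)"

lemma ifz: "(if P then c else (0::real)) * y = (if P then c * y else 0)" by simp

lemma transpose_Em: "transpose (Em p q c) = Em q p c"
  by (auto simp: transpose_def Em_def vec_eq_iff)
lemma transpose_add': "transpose (M + N :: real^'n^'m) = transpose M + transpose N"
  by (simp add: transpose_def vec_eq_iff)
lemma transpose_sum': "transpose (\<Sum>i\<in>I. M i :: real^'n^'m) = (\<Sum>i\<in>I. transpose (M i))"
  by (induct I rule: infinite_finite_induct) (simp_all add: transpose_add' transpose_def vec_eq_iff)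

lemma AjM_sym: "transpose (AjM \<alpha> \<gamma> A j V) = AjM \<alpha> \<gamma> A j V"
  unfolding AjM_def transpose_add' transpose_sum' transpose_Em by (simp add: add.commute)

lemma Em_mult: "Em p q c *v w = (\<chi> a. if a = p then c * w $ q else 0)"
  unfolding Em_def matrix_vector_mult_def by (simp add: vec_eq_iff ifz cong: if_cong)

lemma sum_mult_vec: "(\<Sum>i\<in>I. M i :: real^'n^'m) *v w = (\<Sum>i\<in>I. M i *v w)"
  by (induct I rule: infinite_finite_induct) (simp_all add: matrix_vector_mult_add_rdistrib)

lemma diag8_mult: "(diag8 d *v w) $ a = d $ a * w $ a"
  unfolding diag8_def matrix_vector_mult_def by (simp add: ifz cong: if_cong)

lemma AjM_comp: "(AjM \<alpha> \<gamma> A j V *v w) $ a =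
     (if a = 1 then V $ uix j / (Rof \<alpha> \<gamma> A V * PR \<alpha> \<gamma> A (Rof \<alpha> \<gamma> A V) (V $ 8)) * w $ 1 + w $ uix j else 0)
     + (if a = uix j then w $ 1 else 0)
     + (\<Sum>i\<in>UNIV. if a = uix i then Rof \<alpha> \<gamma> A V * V $ uix j * w $ uix i else 0)
     + (\<Sum>i\<in>UNIV. \<Sum>k\<in>UNIV. (if a = uix i then cc j V i k * w $ hix k else 0) + (if a = hix k then cc j V i k * w $ uix i else 0))
     + (\<Sum>i\<in>UNIV. if a = hix i then V $ uix j * w $ hix i else 0)
     + (if a = 8 then V $ uix j * w $ 8 else 0)"
  unfolding AjM_def matrix_vector_mult_add_rdistrib sum_mult_vec Em_mult
  by (simp add: if_distrib cong: if_cong)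

lemma pos_diag8: "(\<forall>i. d $ i > 0) \<Longrightarrow> pos_def8 (diag8 d)"
proof -
  assume d: "\<forall>i. d $ i > 0"
  show ?thesis unfolding pos_def8_def
  proof (intro allI impI)
    fix v :: "real^8" assume "v \<noteq> 0"
    then obtain i where i: "v $ i \<noteq> 0" by (auto simp: vec_eq_iff)
    have "v \<bullet> (diag8 d *v v) = (\<Sum>a\<in>UNIV. d $ a * (v $ a)\<^sup>2)"
      unfolding inner_vec_def diag8_mult by (simp add: power2_eq_square algebra_simps)
    also have "\<dots> > 0"
    proof (rule sum_pos2[where i=i])
      show "0 < d $ i * (v $ i)\<^sup>2" using d i by simp
      fix a :: 8
      have "d $ a > 0" using d by simp
      then show "0 \<le> d $ a * (v $ a)\<^sup>2" by simp
    qed simp_all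
    finally show "0 < v \<bullet> (diag8 d *v v)" .
  qed
qed

lemma Pfun_strict:
  assumes "0 < r1" "r1 < r2" "S \<ge> 0" "\<alpha> \<ge> 1" "\<gamma> \<ge> 1" "A > 0"
  shows "Pfun \<alpha> \<gamma> A r1 S < Pfun \<alpha> \<gamma> A r2 S"
proof -
  have S1: "S + 1 > 0" using assms by simp
  have "r1 * S / (S + 1) \<le> r2 * S / (S + 1)"
    using assms S1 by (intro divide_right_mono mult_right_mono) auto
  then have 1: "(r1 * S / (S + 1)) powr \<alpha> \<le> (r2 * S / (S + 1)) powr \<alpha>"
    using assms S1 by (intro powr_mono2) auto
  have "r1 / (S + 1) < r2 / (S + 1)" using assms S1 by (simp add: divide_strict_right_mono)
  then have "(r1 / (S + 1)) powr \<gamma> < (r2 / (S + 1)) powr \<gamma>"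
    using assms S1 by (intro powr_less_mono2) auto
  then have 2: "A * (r1 / (S + 1)) powr \<gamma> < A * (r2 / (S + 1)) powr \<gamma>" using assms by simp
  show ?thesis unfolding Pfun_def using 1 2 by simp
qed

lemma Rof_eq:
  assumes "0 < r" "V $ 8 \<ge> 0" "V $ 1 = Pfun \<alpha> \<gamma> A r (V $ 8)" "\<alpha> \<ge> 1" "\<gamma> \<ge> 1" "A > 0"
  shows "Rof \<alpha> \<gamma> A V = r"
  unfolding Rof_def
proof (rule the_equality)
  show "0 < r \<and> Pfun \<alpha> \<gamma> A r (V $ 8) = V $ 1" using assms by simp
  fix r' assume h: "0 < r' \<and> Pfun \<alpha> \<gamma> A r' (V $ 8) = V $ 1"
  show "r' = r"
  proof (rule ccontr)
    assume "r' \<noteq> r"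
    then consider "r' < r" | "r < r'" by linarith
    then show False
    proof cases
      case 1 then show False using Pfun_strict[of r' r "V $ 8" \<alpha> \<gamma> A] h assms by simp
    next
      case 2 then show False using Pfun_strict[of r r' "V $ 8" \<alpha> \<gamma> A] h assms by simp
    qed
  qed
qed

lemma px_eq2:
  assumes "((\<lambda>s. f t (x + s *\<^sub>R axis j 1)) has_vector_derivative d) (at 0)" "d = d'"
  shows "px j f t x = d'"
  unfolding px_def using vector_derivative_at[OF assms(1)] assms(2) by simp

lemma pt_eq2:
  assumes "((\<lambda>s. f s x) has_vector_derivative d) (at t within {0..T})" "d = d'" "t \<in> {0..T}" "0 < T"
  shows "pt T f t x = d'"
  using pt_eq[of f x d t T] assms by simp

context
  fixes T \<alpha> \<gamma> A :: real and n \<rho> :: "real \<Rightarrow> real^3 \<Rightarrow> real" and u H :: "real \<Rightarrow> real^3 \<Rightarrow> real^3"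
    and t :: real and x :: "real^3"
  assumes Cn: "C1_slab T n" and Cr: "C1_slab T \<rho>" and Cu: "C1_slab T u" and CH: "C1_slab T H"
    and pos: "\<forall>t\<in>{0..T}. \<forall>x. n t x > 0 \<and> \<rho> t x \<ge> 0 \<and> dvg H t x = 0"
    and tT: "t \<in> {0..T}" and T0: "0 < T" and a1: "\<alpha> \<ge> 1"
begin

lemma posT: "\<forall>s\<in>{0..T}. n s x > 0 \<and> \<rho> s x \<ge> 0" using pos by auto
lemma posX: "\<forall>s\<in>UNIV. n t (x + s *\<^sub>R axis j 1) > 0 \<and> \<rho> t (x + s *\<^sub>R axis j 1) \<ge> 0" using pos tT by auto

lemmas Dt = comp_derivs[OF C1_pt[OF Cn tT] C1_pt[OF Cr tT] C1_pt[OF Cu tT] C1_pt[OF CH tT] tT posT a1]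
lemmas Dx = comp_derivs[OF C1_px[OF Cn tT] C1_px[OF Cr tT] C1_px[OF Cu tT] C1_px[OF CH tT] UNIV_I posX a1]

definition "prr = (if \<alpha> = 1 then 1 else \<alpha> * \<rho> t x powr (\<alpha> - 1))"
definition "Pn = A * (\<gamma> * n t x powr (\<gamma> - 1))"

lemma pt_nu: "pt T (\<lambda>t x. n t x *\<^sub>R u t x) t x = n t x *\<^sub>R pt T u t x + pt T n t x *\<^sub>R u t x"
  by (rule pt_eq[OF _ tT T0], rule Dt(1))
lemma px_nu: "px j (\<lambda>t x. n t x *\<^sub>R u t x) t x = n t x *\<^sub>R px j u t x + px j n t x *\<^sub>R u t x"
  by (rule px_eq2, rule Dx(1), simp)
lemma pt_ru: "pt T (\<lambda>t x. \<rho> t x *\<^sub>R u t x) t x = \<rho> t x *\<^sub>R pt T u t x + pt T \<rho> t x *\<^sub>R u t x"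
  by (rule pt_eq[OF _ tT T0], rule Dt(2))
lemma px_ru: "px j (\<lambda>t x. \<rho> t x *\<^sub>R u t x) t x = \<rho> t x *\<^sub>R px j u t x + px j \<rho> t x *\<^sub>R u t x"
  by (rule px_eq2, rule Dx(2), simp)
lemma pt_Ru: "pt T (\<lambda>t x. (\<rho> t x + n t x) *\<^sub>R u t x) t x
   = (\<rho> t x + n t x) *\<^sub>R pt T u t x + (pt T \<rho> t x + pt T n t x) *\<^sub>R u t x"
  by (rule pt_eq[OF _ tT T0], rule Dt(3))
lemma px_M: "px j (\<lambda>t x. (\<rho> t x + n t x) *\<^sub>R outer (u t x) (u t x) - outer (H t x) (H t x)) t x
   = (\<rho> t x + n t x) *\<^sub>R (outer (px j u t x) (u t x) + outer (u t x) (px j u t x))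
     + (px j \<rho> t x + px j n t x) *\<^sub>R outer (u t x) (u t x)
     - (outer (px j H t x) (H t x) + outer (H t x) (px j H t x))"
  by (rule px_eq2, rule Dx(4), simp)
lemma pt_P: "pt T (\<lambda>t x. \<rho> t x powr \<alpha> + A * n t x powr \<gamma>) t x = prr * pt T \<rho> t x + Pn * pt T n t x"
  by (rule pt_eq2[OF _ _ tT T0], rule Dt(5), simp add: prr_def Pn_def mult.assoc)
lemma px_P: "px j (\<lambda>t x. \<rho> t x powr \<alpha> + A * n t x powr \<gamma>) t x = prr * px j \<rho> t x + Pn * px j n t x"
  by (rule px_eq2, rule Dx(5), simp add: prr_def Pn_def)
lemma px_q: "px j (\<lambda>t x. \<rho> t x powr \<alpha> + A * n t x powr \<gamma> + 1/2 * (norm (H t x))\<^sup>2) t x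
   = prr * px j \<rho> t x + Pn * px j n t x + H t x \<bullet> px j H t x"
  by (rule px_eq2, rule Dx(6), simp add: prr_def Pn_def)
lemma px_cr: "px j (\<lambda>t x. cross3 (u t x) (H t x)) t x = cross3 (px j u t x) (H t x) + cross3 (u t x) (px j H t x)"
  by (rule px_eq2, rule Dx(7), simp)
lemma pt_S: "pt T (\<lambda>t x. \<rho> t x / n t x) t x = (pt T \<rho> t x * n t x - \<rho> t x * pt T n t x) / (n t x * n t x)"
  by (rule pt_eq[OF _ tT T0], rule Dt(8))
lemma px_S: "px j (\<lambda>t x. \<rho> t x / n t x) t x = (px j \<rho> t x * n t x - \<rho> t x * px j n t x) / (n t x * n t x)"
  by (rule px_eq2, rule Dx(8), simp)
lemma pt_U: "pt T (\<lambda>t x. vector [\<rho> t x powr \<alpha> + A * n t x powr \<gamma>, u t x $ 1, u t x $ 2, u t x $ 3,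
      H t x $ 1, H t x $ 2, H t x $ 3, \<rho> t x / n t x] :: real^8) t x
  = vector [prr * pt T \<rho> t x + Pn * pt T n t x, pt T u t x $ 1, pt T u t x $ 2, pt T u t x $ 3,
      pt T H t x $ 1, pt T H t x $ 2, pt T H t x $ 3, (pt T \<rho> t x * n t x - \<rho> t x * pt T n t x) / (n t x * n t x)]"
  by (rule pt_eq2[OF _ _ tT T0], rule Dt(9), simp add: prr_def Pn_def mult.assoc)
lemma px_U: "px j (\<lambda>t x. vector [\<rho> t x powr \<alpha> + A * n t x powr \<gamma>, u t x $ 1, u t x $ 2, u t x $ 3,
      H t x $ 1, H t x $ 2, H t x $ 3, \<rho> t x / n t x] :: real^8) t x
  = vector [prr * px j \<rho> t x + Pn * px j n t x, px j u t x $ 1, px j u t x $ 2, px j u t x $ 3,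
      px j H t x $ 1, px j H t x $ 2, px j H t x $ 3, (px j \<rho> t x * n t x - \<rho> t x * px j n t x) / (n t x * n t x)]"
  by (rule px_eq2, rule Dx(9), simp add: prr_def Pn_def mult.assoc)


lemma n0: "n t x > 0" and r0: "\<rho> t x \<ge> 0" using pos tT by auto
lemma dH3: "px 3 H t x $ 3 = - px 1 H t x $ 1 - px 2 H t x $ 2"
proof -
  have "dvg H t x = 0" using pos tT by auto
  then have "px 1 H t x $ 1 + px 2 H t x $ 2 + px 3 H t x $ 3 = 0" by (simp add: dvg_def sum_3)
  then show ?thesis by linarith
qed

lemma e1: "pt T n t x + dvg (\<lambda>t x. n t x *\<^sub>R u t x) t x
   = (pt T n t x + (\<Sum>j\<in>UNIV. u t x $ j * px j n t x)) + n t x * dvg u t x"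
  unfolding dvg_def px_nu by (simp add: sum_3 algebra_simps)
lemma e2: "pt T \<rho> t x + dvg (\<lambda>t x. \<rho> t x *\<^sub>R u t x) t x
   = (pt T \<rho> t x + (\<Sum>j\<in>UNIV. u t x $ j * px j \<rho> t x)) + \<rho> t x * dvg u t x"
  unfolding dvg_def px_ru by (simp add: sum_3 algebra_simps)
lemma e3: "pt T (\<lambda>t x. (\<rho> t x + n t x) *\<^sub>R u t x) t x
   + dvgT (\<lambda>t x. (\<rho> t x + n t x) *\<^sub>R outer (u t x) (u t x) - outer (H t x) (H t x)) t x + G
   = ((pt T n t x + dvg (\<lambda>t x. n t x *\<^sub>R u t x) t x) + (pt T \<rho> t x + dvg (\<lambda>t x. \<rho> t x *\<^sub>R u t x) t x)) *\<^sub>R u t x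
     + ((\<rho> t x + n t x) *\<^sub>R matd T u u t x - adv H H t x + G)"
  unfolding vec_eq_iff dvgT_def matd_def adv_def dvg_def px_M pt_Ru px_nu px_ru
  by (simp add: sum_3 outer_def algebra_simps dH3)
lemma e4: "pt T H t x - curl (\<lambda>t x. cross3 (u t x) (H t x)) t x
   = matd T u H t x - adv H u t x + dvg u t x *\<^sub>R H t x"
  unfolding vec_eq_iff forall_3 curl_def matd_def adv_def dvg_def px_cr
  by (simp add: sum_3 cross3_def algebra_simps dH3)
lemma fP: "matd T u (\<lambda>t x. \<rho> t x powr \<alpha> + A * n t x powr \<gamma>) t x
   = prr * (pt T \<rho> t x + (\<Sum>j\<in>UNIV. u t x $ j * px j \<rho> t x)) + Pn * (pt T n t x + (\<Sum>j\<in>UNIV. u t x $ j * px j n t x))"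
  unfolding matd_def adv_def pt_P px_P by (simp add: sum_3 algebra_simps)
lemma fS: "matd T u (\<lambda>t x. \<rho> t x / n t x) t x
   = ((pt T \<rho> t x + (\<Sum>j\<in>UNIV. u t x $ j * px j \<rho> t x)) * n t x - \<rho> t x * (pt T n t x + (\<Sum>j\<in>UNIV. u t x $ j * px j n t x))) / (n t x * n t x)"
  unfolding matd_def adv_def pt_S px_S using n0 by (simp add: sum_3 field_simps)
lemma KK:
  assumes "A > 0" "\<gamma> \<ge> 1"
  shows "(\<rho> t x + n t x) * PR \<alpha> \<gamma> A (\<rho> t x + n t x) (\<rho> t x / n t x) = \<rho> t x * prr + n t x * Pn"
    and "\<rho> t x * prr + n t x * Pn > 0"
proof -
  have Rp: "\<rho> t x + n t x > 0" using n0 r0 by simp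
  have e: "\<rho> t x / n t x + 1 = (\<rho> t x + n t x) / n t x" using n0 by (simp add: field_simps)
  have a: "(\<rho> t x + n t x) * (\<rho> t x / n t x) / (\<rho> t x / n t x + 1) = \<rho> t x"
    and b: "(\<rho> t x + n t x) / (\<rho> t x / n t x + 1) = n t x"
  proof -
    have nz: "(\<rho> t x + n t x) / n t x \<noteq> 0" using n0 Rp by simp
    have "(\<rho> t x + n t x) * (\<rho> t x / n t x) = \<rho> t x * ((\<rho> t x + n t x) / n t x)" by simp
    then show "(\<rho> t x + n t x) * (\<rho> t x / n t x) / (\<rho> t x / n t x + 1) = \<rho> t x"
      unfolding e using nz by simp
    show "(\<rho> t x + n t x) / (\<rho> t x / n t x + 1) = n t x" unfolding e using n0 Rp by simp
  qed
  have 1: "\<rho> t x * prr = \<alpha> * \<rho> t x powr \<alpha>"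
  proof (cases "\<rho> t x = 0")
    case False
    then have "\<rho> t x > 0" using r0 by simp
    then show ?thesis unfolding prr_def by (auto simp: powr_diff)
  qed (simp add: prr_def)
  have 2: "n t x * Pn = \<gamma> * A * n t x powr \<gamma>" unfolding Pn_def using n0 by (simp add: powr_diff)
  show "(\<rho> t x + n t x) * PR \<alpha> \<gamma> A (\<rho> t x + n t x) (\<rho> t x / n t x) = \<rho> t x * prr + n t x * Pn"
  proof -
    have g: "\<And>R a b X Y :: real. R > 0 \<Longrightarrow> R * (a / R * X + b / R * Y) = a * X + b * Y"
      by (simp add: field_simps)
    show ?thesis unfolding PR_def a b 1 2 using g[OF Rp] by simp
  qed
  have "\<alpha> * \<rho> t x powr \<alpha> \<ge> 0" using a1 by simp
  moreover have "\<gamma> * A * n t x powr \<gamma> > 0" using assms n0 by simp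
  ultimately show "\<rho> t x * prr + n t x * Pn > 0" using 1 2 by simp
qed


lemma point_equiv:
  assumes A: "A > 0" and g: "\<gamma> \<ge> 1"
  shows "(pt T n t x + dvg (\<lambda>t x. n t x *\<^sub>R u t x) t x = 0 \<and>
          pt T \<rho> t x + dvg (\<lambda>t x. \<rho> t x *\<^sub>R u t x) t x = 0 \<and>
          pt T (\<lambda>t x. (\<rho> t x + n t x) *\<^sub>R u t x) t x
            + dvgT (\<lambda>t x. (\<rho> t x + n t x) *\<^sub>R outer (u t x) (u t x) - outer (H t x) (H t x)) t x
            + grad (\<lambda>t x. \<rho> t x powr \<alpha> + A * n t x powr \<gamma> + 1/2 * (norm (H t x))\<^sup>2) t x = 0 \<and>
          pt T H t x - curl (\<lambda>t x. cross3 (u t x) (H t x)) t x = 0)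
    \<longleftrightarrow> (1 / ((\<rho> t x + n t x) * PR \<alpha> \<gamma> A (\<rho> t x + n t x) (\<rho> t x / n t x))
            * matd T u (\<lambda>t x. \<rho> t x powr \<alpha> + A * n t x powr \<gamma>) t x + dvg u t x = 0 \<and>
          (\<rho> t x + n t x) *\<^sub>R matd T u u t x - adv H H t x
            + grad (\<lambda>t x. \<rho> t x powr \<alpha> + A * n t x powr \<gamma> + 1/2 * (norm (H t x))\<^sup>2) t x = 0 \<and>
          matd T u H t x - adv H u t x + dvg u t x *\<^sub>R H t x = 0 \<and>
          matd T u (\<lambda>t x. \<rho> t x / n t x) t x = 0)"
proof -
  have K0: "(\<rho> t x + n t x) * PR \<alpha> \<gamma> A (\<rho> t x + n t x) (\<rho> t x / n t x) > 0"
    using KK[OF A g] by simp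
  have f1: "1 / ((\<rho> t x + n t x) * PR \<alpha> \<gamma> A (\<rho> t x + n t x) (\<rho> t x / n t x))
            * matd T u (\<lambda>t x. \<rho> t x powr \<alpha> + A * n t x powr \<gamma>) t x + dvg u t x
     = 1 / ((\<rho> t x + n t x) * PR \<alpha> \<gamma> A (\<rho> t x + n t x) (\<rho> t x / n t x))
        * (prr * (pt T \<rho> t x + (\<Sum>j\<in>UNIV. u t x $ j * px j \<rho> t x)) + Pn * (pt T n t x + (\<Sum>j\<in>UNIV. u t x $ j * px j n t x)))
       + dvg u t x"
    by (simp only: fP)
  show ?thesis
    by (rule key_logic[OF n0 KK(1)[OF A g] K0 e1 e2 e3 e4 f1 fS])
qed


lemma ab: "(\<rho> t x + n t x) * (\<rho> t x / n t x) / (\<rho> t x / n t x + 1) = \<rho> t x"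
    and ab2: "(\<rho> t x + n t x) / (\<rho> t x / n t x + 1) = n t x"
proof -
  have Rp: "\<rho> t x + n t x > 0" using n0 r0 by simp
  have e: "\<rho> t x / n t x + 1 = (\<rho> t x + n t x) / n t x" using n0 by (simp add: field_simps)
  have nz: "(\<rho> t x + n t x) / n t x \<noteq> 0" using n0 Rp by simp
  have "(\<rho> t x + n t x) * (\<rho> t x / n t x) = \<rho> t x * ((\<rho> t x + n t x) / n t x)" by simp
  then show "(\<rho> t x + n t x) * (\<rho> t x / n t x) / (\<rho> t x / n t x + 1) = \<rho> t x"
    unfolding e using nz by simp
  show "(\<rho> t x + n t x) / (\<rho> t x / n t x + 1) = n t x" unfolding e using n0 Rp by simp
qed

lemma P_Pfun: "\<rho> t x powr \<alpha> + A * n t x powr \<gamma> = Pfun \<alpha> \<gamma> A (\<rho> t x + n t x) (\<rho> t x / n t x)"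
  unfolding Pfun_def ab ab2 ..

lemma Rof_U:
  assumes "A > 0" "\<gamma> \<ge> 1"
  shows "Rof \<alpha> \<gamma> A (vector [\<rho> t x powr \<alpha> + A * n t x powr \<gamma>, u t x $ 1, u t x $ 2, u t x $ 3,
      H t x $ 1, H t x $ 2, H t x $ 3, \<rho> t x / n t x]) = \<rho> t x + n t x"
  by (rule Rof_eq) (use n0 r0 a1 assms P_Pfun in simp_all)

lemma point_matrix:
  assumes A: "A > 0" and g: "\<gamma> \<ge> 1"
  defines "U \<equiv> (\<lambda>t x. vector [\<rho> t x powr \<alpha> + A * n t x powr \<gamma>, u t x $ 1, u t x $ 2, u t x $ 3,
      H t x $ 1, H t x $ 2, H t x $ 3, \<rho> t x / n t x] :: real^8)"
  defines "Z \<equiv> diag8 (vector [1 / ((\<rho> t x + n t x) * PR \<alpha> \<gamma> A (\<rho> t x + n t x) (\<rho> t x / n t x)),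
          \<rho> t x + n t x, \<rho> t x + n t x, \<rho> t x + n t x, 1, 1, 1, 1]) *v pt T U t x
       + (\<Sum>j\<in>UNIV. AjM \<alpha> \<gamma> A j (U t x) *v px j U t x)"
  shows "Z $ 1 = 1 / ((\<rho> t x + n t x) * PR \<alpha> \<gamma> A (\<rho> t x + n t x) (\<rho> t x / n t x))
            * matd T u (\<lambda>t x. \<rho> t x powr \<alpha> + A * n t x powr \<gamma>) t x + dvg u t x"
    and "Z $ 2 = ((\<rho> t x + n t x) *\<^sub>R matd T u u t x - adv H H t x
            + grad (\<lambda>t x. \<rho> t x powr \<alpha> + A * n t x powr \<gamma> + 1/2 * (norm (H t x))\<^sup>2) t x) $ 1"
    and "Z $ 3 = ((\<rho> t x + n t x) *\<^sub>R matd T u u t x - adv H H t x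
            + grad (\<lambda>t x. \<rho> t x powr \<alpha> + A * n t x powr \<gamma> + 1/2 * (norm (H t x))\<^sup>2) t x) $ 2"
    and "Z $ 4 = ((\<rho> t x + n t x) *\<^sub>R matd T u u t x - adv H H t x
            + grad (\<lambda>t x. \<rho> t x powr \<alpha> + A * n t x powr \<gamma> + 1/2 * (norm (H t x))\<^sup>2) t x) $ 3"
    and "Z $ 5 = (matd T u H t x - adv H u t x + dvg u t x *\<^sub>R H t x) $ 1"
    and "Z $ 6 = (matd T u H t x - adv H u t x + dvg u t x *\<^sub>R H t x) $ 2"
    and "Z $ 7 = (matd T u H t x - adv H u t x + dvg u t x *\<^sub>R H t x) $ 3"
    and "Z $ 8 = matd T u (\<lambda>t x. \<rho> t x / n t x) t x"
proof -
  show "Z $ 1 = 1 / ((\<rho> t x + n t x) * PR \<alpha> \<gamma> A (\<rho> t x + n t x) (\<rho> t x / n t x))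
            * matd T u (\<lambda>t x. \<rho> t x powr \<alpha> + A * n t x powr \<gamma>) t x + dvg u t x"
  unfolding Z_def U_def vector_add_component sum_component diag8_mult AjM_comp Rof_U[OF A g] pt_U px_U
      matd_def adv_def pt_P px_P dvg_def
    by (simp add: sum_3 uix_def hix_def cc_def algebra_simps add_divide_distrib)
  show "Z $ 2 = ((\<rho> t x + n t x) *\<^sub>R matd T u u t x - adv H H t x
            + grad (\<lambda>t x. \<rho> t x powr \<alpha> + A * n t x powr \<gamma> + 1/2 * (norm (H t x))\<^sup>2) t x) $ 1"
  unfolding Z_def U_def vector_add_component sum_component diag8_mult AjM_comp Rof_U[OF A g] pt_U px_U
      matd_def adv_def grad_def px_q vector_minus_component vector_scaleR_component vec_lambda_beta
    by (simp add: sum_3 uix_def hix_def cc_def algebra_simps inner_vec_def)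
  show "Z $ 3 = ((\<rho> t x + n t x) *\<^sub>R matd T u u t x - adv H H t x
            + grad (\<lambda>t x. \<rho> t x powr \<alpha> + A * n t x powr \<gamma> + 1/2 * (norm (H t x))\<^sup>2) t x) $ 2"
  unfolding Z_def U_def vector_add_component sum_component diag8_mult AjM_comp Rof_U[OF A g] pt_U px_U
      matd_def adv_def grad_def px_q vector_minus_component vector_scaleR_component vec_lambda_beta
    by (simp add: sum_3 uix_def hix_def cc_def algebra_simps inner_vec_def)
  show "Z $ 4 = ((\<rho> t x + n t x) *\<^sub>R matd T u u t x - adv H H t x
            + grad (\<lambda>t x. \<rho> t x powr \<alpha> + A * n t x powr \<gamma> + 1/2 * (norm (H t x))\<^sup>2) t x) $ 3"
  unfolding Z_def U_def vector_add_component sum_component diag8_mult AjM_comp Rof_U[OF A g] pt_U px_U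
      matd_def adv_def grad_def px_q vector_minus_component vector_scaleR_component vec_lambda_beta
    by (simp add: sum_3 uix_def hix_def cc_def algebra_simps inner_vec_def)
  show "Z $ 5 = (matd T u H t x - adv H u t x + dvg u t x *\<^sub>R H t x) $ 1"
  unfolding Z_def U_def vector_add_component sum_component diag8_mult AjM_comp Rof_U[OF A g] pt_U px_U
      matd_def adv_def dvg_def vector_minus_component vector_scaleR_component
    by (simp add: sum_3 uix_def hix_def cc_def algebra_simps)
  show "Z $ 6 = (matd T u H t x - adv H u t x + dvg u t x *\<^sub>R H t x) $ 2"
  unfolding Z_def U_def vector_add_component sum_component diag8_mult AjM_comp Rof_U[OF A g] pt_U px_U
      matd_def adv_def dvg_def vector_minus_component vector_scaleR_component
    by (simp add: sum_3 uix_def hix_def cc_def algebra_simps)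
  show "Z $ 7 = (matd T u H t x - adv H u t x + dvg u t x *\<^sub>R H t x) $ 3"
  unfolding Z_def U_def vector_add_component sum_component diag8_mult AjM_comp Rof_U[OF A g] pt_U px_U
      matd_def adv_def dvg_def vector_minus_component vector_scaleR_component
    by (simp add: sum_3 uix_def hix_def cc_def algebra_simps)
  show "Z $ 8 = matd T u (\<lambda>t x. \<rho> t x / n t x) t x"
  unfolding Z_def U_def vector_add_component sum_component diag8_mult AjM_comp Rof_U[OF A g] pt_U px_U
      matd_def adv_def pt_S px_S
    by (simp add: sum_3 uix_def hix_def cc_def algebra_simps add_divide_distrib)
qed

lemma forall_8: "(\<forall>i::8. P i) \<longleftrightarrow> P 1 \<and> P 2 \<and> P 3 \<and> P 4 \<and> P 5 \<and> P 6 \<and> P 7 \<and> P 8"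
  by (metis exhaust_8)

lemma point_part2:
  assumes A: "A > 0" and g: "\<gamma> \<ge> 1"
  shows "\<rho> t x powr \<alpha> + A * n t x powr \<gamma> = Pfun \<alpha> \<gamma> A (\<rho> t x + n t x) (\<rho> t x / n t x) \<and>
     PR \<alpha> \<gamma> A (\<rho> t x + n t x) (\<rho> t x / n t x) > 0 \<and>
     pos_def8 (diag8 (vector [1 / ((\<rho> t x + n t x) * PR \<alpha> \<gamma> A (\<rho> t x + n t x) (\<rho> t x / n t x)),
          \<rho> t x + n t x, \<rho> t x + n t x, \<rho> t x + n t x, 1, 1, 1, 1])) \<and>
     ((1 / ((\<rho> t x + n t x) * PR \<alpha> \<gamma> A (\<rho> t x + n t x) (\<rho> t x / n t x))
            * matd T u (\<lambda>t x. \<rho> t x powr \<alpha> + A * n t x powr \<gamma>) t x + dvg u t x = 0 \<and>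
          (\<rho> t x + n t x) *\<^sub>R matd T u u t x - adv H H t x
            + grad (\<lambda>t x. \<rho> t x powr \<alpha> + A * n t x powr \<gamma> + 1/2 * (norm (H t x))\<^sup>2) t x = 0 \<and>
          matd T u H t x - adv H u t x + dvg u t x *\<^sub>R H t x = 0 \<and>
          matd T u (\<lambda>t x. \<rho> t x / n t x) t x = 0)
      \<longleftrightarrow>
      diag8 (vector [1 / ((\<rho> t x + n t x) * PR \<alpha> \<gamma> A (\<rho> t x + n t x) (\<rho> t x / n t x)),
          \<rho> t x + n t x, \<rho> t x + n t x, \<rho> t x + n t x, 1, 1, 1, 1]) *v
         pt T (\<lambda>t x. vector [\<rho> t x powr \<alpha> + A * n t x powr \<gamma>, u t x $ 1, u t x $ 2, u t x $ 3,
      H t x $ 1, H t x $ 2, H t x $ 3, \<rho> t x / n t x] :: real^8) t x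
       + (\<Sum>j\<in>UNIV. AjM \<alpha> \<gamma> A j (vector [\<rho> t x powr \<alpha> + A * n t x powr \<gamma>, u t x $ 1, u t x $ 2, u t x $ 3,
      H t x $ 1, H t x $ 2, H t x $ 3, \<rho> t x / n t x]) *v px j (\<lambda>t x. vector [\<rho> t x powr \<alpha> + A * n t x powr \<gamma>, u t x $ 1, u t x $ 2, u t x $ 3,
      H t x $ 1, H t x $ 2, H t x $ 3, \<rho> t x / n t x] :: real^8) t x) = 0)"
proof -
  have K0: "(\<rho> t x + n t x) * PR \<alpha> \<gamma> A (\<rho> t x + n t x) (\<rho> t x / n t x) > 0"
    using KK[OF A g] by simp
  have Rp: "\<rho> t x + n t x > 0" using n0 r0 by simp
  have PRp: "PR \<alpha> \<gamma> A (\<rho> t x + n t x) (\<rho> t x / n t x) > 0"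
    using K0 Rp by (simp add: zero_less_mult_iff)
  have pd: "pos_def8 (diag8 (vector [1 / ((\<rho> t x + n t x) * PR \<alpha> \<gamma> A (\<rho> t x + n t x) (\<rho> t x / n t x)),
          \<rho> t x + n t x, \<rho> t x + n t x, \<rho> t x + n t x, 1, 1, 1, 1]))"
    by (rule pos_diag8) (simp add: forall_8 K0 Rp del: One_nat_def)
  note Z = point_matrix[OF A g]
  show ?thesis
    unfolding vec_eq_iff[of _ 0] forall_8 Z zero_index vec_eq_iff[of "_ - _ + _" 0] forall_3
      vec_eq_iff[of "_ - _ + _ *\<^sub>R _" 0]
    using P_Pfun PRp pd K0 by (simp del: One_nat_def)
qed

end

theorem mainTheorem1:
  fixes \<alpha> \<gamma> A T :: real
  assumes "\<alpha> \<ge> 1" and "\<gamma> \<ge> 1" and "A > 0" and "T > 0"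
  shows
   "(\<forall>(n :: real \<Rightarrow> real^3 \<Rightarrow> real) (\<rho> :: real \<Rightarrow> real^3 \<Rightarrow> real)
       (u :: real \<Rightarrow> real^3 \<Rightarrow> real^3) (H :: real \<Rightarrow> real^3 \<Rightarrow> real^3).
      C1_slab T n \<and> C1_slab T \<rho> \<and> C1_slab T u \<and> C1_slab T H \<and>
      (\<forall>t\<in>{0..T}. \<forall>x. n t x > 0 \<and> \<rho> t x \<ge> 0 \<and> dvg H t x = 0) \<longrightarrow>
      (let R = (\<lambda>t x. \<rho> t x + n t x);
           S = (\<lambda>t x. \<rho> t x / n t x);
           P = (\<lambda>t x. \<rho> t x powr \<alpha> + A * n t x powr \<gamma>);
           q = (\<lambda>t x. P t x + 1/2 * (norm (H t x))\<^sup>2)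
       in
        ((\<forall>t\<in>{0..T}. \<forall>x.
            pt T n t x + dvg (\<lambda>t x. n t x *\<^sub>R u t x) t x = 0 \<and>
            pt T \<rho> t x + dvg (\<lambda>t x. \<rho> t x *\<^sub>R u t x) t x = 0 \<and>
            pt T (\<lambda>t x. R t x *\<^sub>R u t x) t x
              + dvgT (\<lambda>t x. R t x *\<^sub>R outer (u t x) (u t x) - outer (H t x) (H t x)) t x
              + grad q t x = 0 \<and>
            pt T H t x - curl (\<lambda>t x. cross3 (u t x) (H t x)) t x = 0)
        \<longleftrightarrow>
         (\<forall>t\<in>{0..T}. \<forall>x.
            1 / (R t x * PR \<alpha> \<gamma> A (R t x) (S t x)) * matd T u P t x + dvg u t x = 0 \<and>
            R t x *\<^sub>R matd T u u t x - adv H H t x + grad q t x = 0 \<and>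
            matd T u H t x - adv H u t x + dvg u t x *\<^sub>R H t x = 0 \<and>
            matd T u S t x = 0))))
    \<and>
    (\<exists>Aj :: 3 \<Rightarrow> real^8 \<Rightarrow> real^8^8.
      (\<forall>j V. transpose (Aj j V) = Aj j V) \<and>
      (\<forall>(n :: real \<Rightarrow> real^3 \<Rightarrow> real) (\<rho> :: real \<Rightarrow> real^3 \<Rightarrow> real)
         (u :: real \<Rightarrow> real^3 \<Rightarrow> real^3) (H :: real \<Rightarrow> real^3 \<Rightarrow> real^3).
        C1_slab T n \<and> C1_slab T \<rho> \<and> C1_slab T u \<and> C1_slab T H \<and>
        (\<forall>t\<in>{0..T}. \<forall>x. n t x > 0 \<and> \<rho> t x \<ge> 0 \<and> dvg H t x = 0) \<longrightarrow>
        (let R = (\<lambda>t x. \<rho> t x + n t x);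
             S = (\<lambda>t x. \<rho> t x / n t x);
             P = (\<lambda>t x. \<rho> t x powr \<alpha> + A * n t x powr \<gamma>);
             q = (\<lambda>t x. P t x + 1/2 * (norm (H t x))\<^sup>2);
             U = (\<lambda>t x. vector [P t x, u t x $ 1, u t x $ 2, u t x $ 3,
                                 H t x $ 1, H t x $ 2, H t x $ 3, S t x] :: real^8);
             A0 = (\<lambda>t x. diag8 (vector [1 / (R t x * PR \<alpha> \<gamma> A (R t x) (S t x)),
                                        R t x, R t x, R t x, 1, 1, 1, 1]))
         in
          (\<forall>t\<in>{0..T}. \<forall>x.
             P t x = Pfun \<alpha> \<gamma> A (R t x) (S t x) \<and>
             PR \<alpha> \<gamma> A (R t x) (S t x) > 0 \<and>
             pos_def8 (A0 t x) \<and>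
             ((1 / (R t x * PR \<alpha> \<gamma> A (R t x) (S t x)) * matd T u P t x + dvg u t x = 0 \<and>
               R t x *\<^sub>R matd T u u t x - adv H H t x + grad q t x = 0 \<and>
               matd T u H t x - adv H u t x + dvg u t x *\<^sub>R H t x = 0 \<and>
               matd T u S t x = 0)
              \<longleftrightarrow>
              A0 t x *v pt T U t x + (\<Sum>j\<in>UNIV. Aj j (U t x) *v px j U t x) = 0)))))"
proof
  show "\<forall>(n :: real \<Rightarrow> real^3 \<Rightarrow> real) (\<rho> :: real \<Rightarrow> real^3 \<Rightarrow> real)
       (u :: real \<Rightarrow> real^3 \<Rightarrow> real^3) (H :: real \<Rightarrow> real^3 \<Rightarrow> real^3).
      C1_slab T n \<and> C1_slab T \<rho> \<and> C1_slab T u \<and> C1_slab T H \<and>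
      (\<forall>t\<in>{0..T}. \<forall>x. n t x > 0 \<and> \<rho> t x \<ge> 0 \<and> dvg H t x = 0) \<longrightarrow>
      (let R = (\<lambda>t x. \<rho> t x + n t x);
           S = (\<lambda>t x. \<rho> t x / n t x);
           P = (\<lambda>t x. \<rho> t x powr \<alpha> + A * n t x powr \<gamma>);
           q = (\<lambda>t x. P t x + 1/2 * (norm (H t x))\<^sup>2)
       in
        ((\<forall>t\<in>{0..T}. \<forall>x.
            pt T n t x + dvg (\<lambda>t x. n t x *\<^sub>R u t x) t x = 0 \<and>
            pt T \<rho> t x + dvg (\<lambda>t x. \<rho> t x *\<^sub>R u t x) t x = 0 \<and>
            pt T (\<lambda>t x. R t x *\<^sub>R u t x) t x
              + dvgT (\<lambda>t x. R t x *\<^sub>R outer (u t x) (u t x) - outer (H t x) (H t x)) t x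
              + grad q t x = 0 \<and>
            pt T H t x - curl (\<lambda>t x. cross3 (u t x) (H t x)) t x = 0)
        \<longleftrightarrow>
         (\<forall>t\<in>{0..T}. \<forall>x.
            1 / (R t x * PR \<alpha> \<gamma> A (R t x) (S t x)) * matd T u P t x + dvg u t x = 0 \<and>
            R t x *\<^sub>R matd T u u t x - adv H H t x + grad q t x = 0 \<and>
            matd T u H t x - adv H u t x + dvg u t x *\<^sub>R H t x = 0 \<and>
            matd T u S t x = 0)))"
  proof (intro allI impI)
    fix n \<rho> :: "real \<Rightarrow> real^3 \<Rightarrow> real" and u H :: "real \<Rightarrow> real^3 \<Rightarrow> real^3"
    assume h: "C1_slab T n \<and> C1_slab T \<rho> \<and> C1_slab T u \<and> C1_slab T H \<and>
      (\<forall>t\<in>{0..T}. \<forall>x. n t x > 0 \<and> \<rho> t x \<ge> 0 \<and> dvg H t x = 0)"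
    note eq = point_equiv[OF h[THEN conjunct1] h[THEN conjunct2, THEN conjunct1]
          h[THEN conjunct2, THEN conjunct2, THEN conjunct1] h[THEN conjunct2, THEN conjunct2, THEN conjunct2, THEN conjunct1]
          h[THEN conjunct2, THEN conjunct2, THEN conjunct2, THEN conjunct2] _ assms(4) assms(1) assms(3) assms(2)]
    show "let R = (\<lambda>t x. \<rho> t x + n t x);
           S = (\<lambda>t x. \<rho> t x / n t x);
           P = (\<lambda>t x. \<rho> t x powr \<alpha> + A * n t x powr \<gamma>);
           q = (\<lambda>t x. P t x + 1/2 * (norm (H t x))\<^sup>2)
       in
        ((\<forall>t\<in>{0..T}. \<forall>x.
            pt T n t x + dvg (\<lambda>t x. n t x *\<^sub>R u t x) t x = 0 \<and>
            pt T \<rho> t x + dvg (\<lambda>t x. \<rho> t x *\<^sub>R u t x) t x = 0 \<and>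
            pt T (\<lambda>t x. R t x *\<^sub>R u t x) t x
              + dvgT (\<lambda>t x. R t x *\<^sub>R outer (u t x) (u t x) - outer (H t x) (H t x)) t x
              + grad q t x = 0 \<and>
            pt T H t x - curl (\<lambda>t x. cross3 (u t x) (H t x)) t x = 0)
        \<longleftrightarrow>
         (\<forall>t\<in>{0..T}. \<forall>x.
            1 / (R t x * PR \<alpha> \<gamma> A (R t x) (S t x)) * matd T u P t x + dvg u t x = 0 \<and>
            R t x *\<^sub>R matd T u u t x - adv H H t x + grad q t x = 0 \<and>
            matd T u H t x - adv H u t x + dvg u t x *\<^sub>R H t x = 0 \<and>
            matd T u S t x = 0))"
      unfolding Let_def using eq by blast
  qed
next
  show "\<exists>Aj :: 3 \<Rightarrow> real^8 \<Rightarrow> real^8^8.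
      (\<forall>j V. transpose (Aj j V) = Aj j V) \<and>
      (\<forall>(n :: real \<Rightarrow> real^3 \<Rightarrow> real) (\<rho> :: real \<Rightarrow> real^3 \<Rightarrow> real)
         (u :: real \<Rightarrow> real^3 \<Rightarrow> real^3) (H :: real \<Rightarrow> real^3 \<Rightarrow> real^3).
        C1_slab T n \<and> C1_slab T \<rho> \<and> C1_slab T u \<and> C1_slab T H \<and>
        (\<forall>t\<in>{0..T}. \<forall>x. n t x > 0 \<and> \<rho> t x \<ge> 0 \<and> dvg H t x = 0) \<longrightarrow>
        (let R = (\<lambda>t x. \<rho> t x + n t x);
             S = (\<lambda>t x. \<rho> t x / n t x);
             P = (\<lambda>t x. \<rho> t x powr \<alpha> + A * n t x powr \<gamma>);
             q = (\<lambda>t x. P t x + 1/2 * (norm (H t x))\<^sup>2);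
             U = (\<lambda>t x. vector [P t x, u t x $ 1, u t x $ 2, u t x $ 3,
                                 H t x $ 1, H t x $ 2, H t x $ 3, S t x] :: real^8);
             A0 = (\<lambda>t x. diag8 (vector [1 / (R t x * PR \<alpha> \<gamma> A (R t x) (S t x)),
                                        R t x, R t x, R t x, 1, 1, 1, 1]))
         in
          (\<forall>t\<in>{0..T}. \<forall>x.
             P t x = Pfun \<alpha> \<gamma> A (R t x) (S t x) \<and>
             PR \<alpha> \<gamma> A (R t x) (S t x) > 0 \<and>
             pos_def8 (A0 t x) \<and>
             ((1 / (R t x * PR \<alpha> \<gamma> A (R t x) (S t x)) * matd T u P t x + dvg u t x = 0 \<and>
               R t x *\<^sub>R matd T u u t x - adv H H t x + grad q t x = 0 \<and>
               matd T u H t x - adv H u t x + dvg u t x *\<^sub>R H t x = 0 \<and>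
               matd T u S t x = 0)
              \<longleftrightarrow>
              A0 t x *v pt T U t x + (\<Sum>j\<in>UNIV. Aj j (U t x) *v px j U t x) = 0))))"
  proof (rule exI[of _ "AjM \<alpha> \<gamma> A"], intro conjI allI impI)
    show "\<And>j V. transpose (AjM \<alpha> \<gamma> A j V) = AjM \<alpha> \<gamma> A j V" by (rule AjM_sym)
    fix n \<rho> :: "real \<Rightarrow> real^3 \<Rightarrow> real" and u H :: "real \<Rightarrow> real^3 \<Rightarrow> real^3"
    assume h: "C1_slab T n \<and> C1_slab T \<rho> \<and> C1_slab T u \<and> C1_slab T H \<and>
      (\<forall>t\<in>{0..T}. \<forall>x. n t x > 0 \<and> \<rho> t x \<ge> 0 \<and> dvg H t x = 0)"
    note eq = point_part2[OF h[THEN conjunct1] h[THEN conjunct2, THEN conjunct1]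
          h[THEN conjunct2, THEN conjunct2, THEN conjunct1] h[THEN conjunct2, THEN conjunct2, THEN conjunct2, THEN conjunct1]
          h[THEN conjunct2, THEN conjunct2, THEN conjunct2, THEN conjunct2] _ assms(4) assms(1) assms(3) assms(2)]
    show "let R = (\<lambda>t x. \<rho> t x + n t x);
             S = (\<lambda>t x. \<rho> t x / n t x);
             P = (\<lambda>t x. \<rho> t x powr \<alpha> + A * n t x powr \<gamma>);
             q = (\<lambda>t x. P t x + 1/2 * (norm (H t x))\<^sup>2);
             U = (\<lambda>t x. vector [P t x, u t x $ 1, u t x $ 2, u t x $ 3,
                                 H t x $ 1, H t x $ 2, H t x $ 3, S t x] :: real^8);
             A0 = (\<lambda>t x. diag8 (vector [1 / (R t x * PR \<alpha> \<gamma> A (R t x) (S t x)),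
                                        R t x, R t x, R t x, 1, 1, 1, 1]))
         in
          (\<forall>t\<in>{0..T}. \<forall>x.
             P t x = Pfun \<alpha> \<gamma> A (R t x) (S t x) \<and>
             PR \<alpha> \<gamma> A (R t x) (S t x) > 0 \<and>
             pos_def8 (A0 t x) \<and>
             ((1 / (R t x * PR \<alpha> \<gamma> A (R t x) (S t x)) * matd T u P t x + dvg u t x = 0 \<and>
               R t x *\<^sub>R matd T u u t x - adv H H t x + grad q t x = 0 \<and>
               matd T u H t x - adv H u t x + dvg u t x *\<^sub>R H t x = 0 \<and>
               matd T u S t x = 0)
              \<longleftrightarrow>
              A0 t x *v pt T U t x + (\<Sum>j\<in>UNIV. AjM \<alpha> \<gamma> A j (U t x) *v px j U t x) = 0))"
      unfolding Let_def using eq by blast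
  qed
qed

end
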